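(* Let $\rho,\sigma,\omega\in\mathcal{S}(\mathbb{C}^2)$ be qubit states each of which is orthogonal to $\sigma_z$ in the Hilbert–Schmidt sense (i.e. $\mathrm{tr}[\rho\sigma_z]=\mathrm{tr}[\sigma\sigma_z]=\mathrm{tr}[\omega\sigma_z]=0$). Then $$d^2_{z,2}(\rho,\sigma)+d^2_{z,2}(\sigma,\omega)\ge d^2_{z,2}(\rho,\omega).$$
   Context: Qubit setting: $\mathcal{H}=\mathbb{C}^2$, $\mathcal{H}^*$ is identified with $\mathbb{C}^2$ via the dual basis, and $A^T$ is the usual matrix transpose; operators on $\mathcal{H}\otimes\mathcal{H}^*$ are $4\times4$ matrices in the basis $e_1\otimes e_1^*,e_1\otimes e_2^*,e_2\otimes e_1^*,e_2\otimes e_2^*$. $\sigma_z=\begin{pmatrix}1&0\\0&-1\end{pmatrix}$. The set of couplings of states $\rho,\omega$ is $\mathcal{C}(\rho,\omega)=\{\Pi\in\mathcal{S}(\mathcal{H}\otimes\mathcal{H}^* ):\mathrm{tr}_{\mathcal{H}^*}[\Pi]=\omega,\ \mathrm{tr}_{\mathcal{H}}[\Pi]=\rho^T\}$. $C_{z,2}=(\sigma_z\otimes I^T-I\otimes\sigma_z^T)^2=\mathrm{diag}(0,4,4,0)$, $D^2_{z,2}(\rho,\omega)=\min_{\Pi\in\mathcal{C}(\rho,\omega)}\mathrm{tr}[\Pi C_{z,2}]$, and $d_{z,2}(\rho,\omega)=\big(D^2_{z,2}(\rho,\omega)-\tfrac12(D^2_{z,2}(\rho,\rho)+D^2_{z,2}(\omega,\omega))\big)^{1/2}$.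 The claim is the triangle inequality for the squared quantity $d^2_{z,2}$. *)

theory Defs
  imports "HOL-Analysis.Analysis"
begin

(* Operators on a finite-dimensional Hilbert space with index type 'n are
   matrices complex^'n^'n (row index first).  The qubit space C^2 uses index
   type 2; operators on H (x) H^* use the index type 2 \<times> 2, where the pair
   (i,j) stands for the basis vector e_i (x) e_j^*. *)

definition mtrace :: "complex^'n^'n \<Rightarrow> complex" where
  "mtrace A = (\<Sum>i\<in>UNIV. A $ i $ i)"

definition adjointm :: "complex^'n^'n \<Rightarrow> complex^'n^'n" where
  "adjointm A = (\<chi> i j. cnj (A $ j $ i))"

definition qform :: "complex^'n^'n \<Rightarrow> complex^'n \<Rightarrow> complex" where
  "qform A v = (\<Sum>i\<in>UNIV. \<Sum>j\<in>UNIV. cnj (v $ i) * A $ i $ j * v $ j)"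

definition psd :: "complex^'n^'n \<Rightarrow> bool" where
  "psd A \<longleftrightarrow> A = adjointm A \<and> (\<forall>v. qform A v \<in> \<real> \<and> 0 \<le> Re (qform A v))"

definition is_state :: "complex^'n^'n \<Rightarrow> bool" where
  "is_state A \<longleftrightarrow> psd A \<and> mtrace A = 1"

definition kron :: "complex^'a^'a \<Rightarrow> complex^'b^'b \<Rightarrow> complex^('a::finite\<times>'b::finite)^('a\<times>'b)" where
  "kron A B = (\<chi> p q. A $ fst p $ fst q * B $ snd p $ snd q)"

definition ptrace_dual :: "complex^('a::finite\<times>'b::finite)^('a\<times>'b) \<Rightarrow> complex^'a^'a" where
  "ptrace_dual P = (\<chi> i k. \<Sum>j\<in>UNIV. P $ (i, j) $ (k, j))"

definition ptrace_H :: "complex^('a::finite\<times>'b::finite)^('a\<times>'b) \<Rightarrow> complex^'b^'b" where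
  "ptrace_H P = (\<chi> j l. \<Sum>i\<in>UNIV. P $ (i, j) $ (i, l))"

definition sigma_z :: "complex^2^2" where
  "sigma_z = (\<chi> i j. if i = j then (if i = 1 then 1 else -1) else 0)"

definition couplings :: "complex^2^2 \<Rightarrow> complex^2^2 \<Rightarrow> (complex^(2\<times>2)^(2\<times>2)) set" where
  "couplings \<rho> \<omega> = {P. is_state P \<and> ptrace_dual P = \<omega> \<and> ptrace_H P = transpose \<rho>}"

definition C_z2 :: "complex^(2\<times>2)^(2\<times>2)" where
  "C_z2 = (let X = kron sigma_z (transpose (mat 1)) - kron (mat 1) (transpose sigma_z) in X ** X)"

(* D^2_{z,2}(rho,omega) = min over couplings of tr[Pi C]; the minimum exists
   (nonempty compact set, continuous cost), so it equals the infimum *)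
definition D2_z2 :: "complex^2^2 \<Rightarrow> complex^2^2 \<Rightarrow> real" where
  "D2_z2 \<rho> \<omega> = Inf ((\<lambda>P. Re (mtrace (P ** C_z2))) ` couplings \<rho> \<omega>)"

definition d2_z2 :: "complex^2^2 \<Rightarrow> complex^2^2 \<Rightarrow> real" where
  "d2_z2 \<rho> \<omega> = D2_z2 \<rho> \<omega> - (D2_z2 \<rho> \<rho> + D2_z2 \<omega> \<omega>) / 2"

end

theory Submission
  imports Defs
begin



lemma sum_22: "sum f (UNIV::(2\<times>2) set) = f (1,1) + f (1,2) + f (2,1) + f (2,2)"
proof -
  have "sum f (UNIV::(2\<times>2) set) = (\<Sum>i\<in>UNIV. \<Sum>j\<in>UNIV. f (i,j))"
    by (simp add: sum.cartesian_product UNIV_Times_UNIV[symmetric] del: UNIV_Times_UNIV)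
  then show ?thesis by (simp add: sum_2 add.assoc)
qed


lemma two_ne: "(1::2) \<noteq> 2" by simp

lemma C_z2_ent: "C_z2 $ p $ q = (if p = q \<and> fst p \<noteq> snd p then 4 else 0)"
proof -
  define d where "d = (\<lambda>i::2. if i = 1 then (1::complex) else -1)"
  have tm: "transpose (mat 1) = (mat 1 :: complex^2^2)" by (simp add: transpose_def mat_def vec_eq_iff)
  have ts: "transpose sigma_z = sigma_z" by (simp add: transpose_def sigma_z_def vec_eq_iff)
  define X where "X = kron sigma_z (transpose (mat 1)) - kron (mat 1) (transpose sigma_z)"
  have X: "X $ p $ q = (if p = q then d (fst p) - d (snd p) else 0)" for p q
    unfolding X_def kron_def sigma_z_def mat_def d_def
    by (cases p; cases q; auto simp: Finite_Cartesian_Product.transpose_def)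
  have "(X ** X) $ p $ q = (if p = q then (d (fst p) - d (snd p))^2 else 0)"
  proof (cases "p = q")
    case True
    have "(\<Sum>k\<in>UNIV. (if q = k then d (fst q) - d (snd q) else 0) * (if k = q then d (fst k) - d (snd k) else 0))
      = (\<Sum>k\<in>UNIV. if k = q then (d (fst q) - d (snd q))^2 else 0)"
      by (rule sum.cong) (auto simp: power2_eq_square)
    then show ?thesis using True unfolding matrix_matrix_mult_def X by simp
  qed (auto simp: matrix_matrix_mult_def X intro!: sum.neutral)
  moreover have "(d (fst p) - d (snd p))^2 = (if fst p \<noteq> snd p then 4 else 0)"
  proof -
    obtain i j where p: "p = (i,j)" by (cases p)
    show ?thesis unfolding p d_def using exhaust_2[of i] exhaust_2[of j]
      by (auto simp: power2_eq_square)
  qed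
  ultimately show ?thesis unfolding C_z2_def Let_def X_def[symmetric] by (cases "p = q") auto
qed



lemma sum_two_pts:
  fixes f :: "'n::finite \<Rightarrow> 'b::comm_monoid_add"
  assumes "i \<noteq> j" "\<And>k. k \<noteq> i \<Longrightarrow> k \<noteq> j \<Longrightarrow> f k = 0"
  shows "sum f UNIV = f i + f j"
proof -
  have "sum f UNIV = sum f {i,j}"
    by (rule sum.mono_neutral_right) (use assms in auto)
  then show ?thesis using assms by simp
qed

lemma qform_two:
  fixes A :: "complex^'n^'n"
  assumes "i \<noteq> j"
  shows "qform A (\<chi> k. if k = i then s else if k = j then t else 0) =
    cnj s * A $ i $ i * s + cnj s * A $ i $ j * t + cnj t * A $ j $ i * s + cnj t * A $ j $ j * t"
proof -
  let ?v = "(\<chi> k. if k = i then s else if k = j then t else 0) :: complex^'n"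
  have "(\<Sum>l\<in>UNIV. cnj (?v $ k) * A $ k $ l * ?v $ l) = cnj (?v $ k) * A $ k $ i * s + cnj (?v $ k) * A $ k $ j * t" for k
    by (subst sum_two_pts[OF assms]) (use assms in auto)
  then have "qform A ?v = (\<Sum>k\<in>UNIV. cnj (?v $ k) * A $ k $ i * s + cnj (?v $ k) * A $ k $ j * t)"
    unfolding qform_def by simp
  also have "\<dots> = cnj s * A $ i $ i * s + cnj s * A $ i $ j * t + (cnj t * A $ j $ i * s + cnj t * A $ j $ j * t)"
    by (subst sum_two_pts[OF assms]) (use assms in auto)
  finally show ?thesis by (simp add: add.assoc)
qed

lemma qform_one:
  fixes A :: "complex^'n^'n"
  shows "qform A (\<chi> k. if k = i then 1 else 0) = A $ i $ i"
proof -
  have "(\<Sum>l\<in>UNIV. cnj ((\<chi> k. if k = i then 1 else 0) $ k) * A $ k $ l * (\<chi> k. if k = i then (1::complex) else 0) $ l) = (if k = i then A $ k $ i else 0)" for k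
    by (simp add: if_distrib[of "\<lambda>x. _ * x"] sum.delta cong: if_cong)
  then show ?thesis unfolding qform_def by (simp add: sum.delta)
qed

lemma psd_herm: "psd A \<Longrightarrow> A $ j $ i = cnj (A $ i $ j)"
  unfolding psd_def adjointm_def by (metis vec_lambda_beta)

lemma psd_diag: assumes "psd A" shows "A $ i $ i = of_real (Re (A $ i $ i))" "Re (A $ i $ i) \<ge> 0"
proof -
  have "qform A (\<chi> k. if k = i then 1 else 0) \<in> \<real>" "0 \<le> Re (qform A (\<chi> k. if k = i then 1 else 0))"
    using assms unfolding psd_def by auto
  then show "A $ i $ i = of_real (Re (A $ i $ i))" "Re (A $ i $ i) \<ge> 0"
    unfolding qform_one by (auto simp: complex_is_Real_iff complex_eq_iff)
qed

lemma psd_offdiag: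
  assumes A: "psd A" and ij: "i \<noteq> j"
  shows "(cmod (A $ i $ j))^2 \<le> Re (A $ i $ i) * Re (A $ j $ j)"
proof -
  define c where "c = A $ i $ j"
  define ri where "ri = Re (A $ i $ i)"
  define rj where "rj = Re (A $ j $ j)"
  have Aii: "A $ i $ i = of_real ri" and Ajj: "A $ j $ j = of_real rj" and ri0: "ri \<ge> 0" and rj0: "rj \<ge> 0"
    using psd_diag[OF A] unfolding ri_def rj_def by auto
  have Aji: "A $ j $ i = cnj c" unfolding c_def by (rule psd_herm[OF A])
  have cc: "c * cnj c = of_real ((cmod c)^2)" "cnj c * c = of_real ((cmod c)^2)"
    using complex_norm_square[of c] by (auto simp: mult.commute)
  have Q: "0 \<le> Re (cnj s * of_real ri * s + cnj s * c * t + cnj t * cnj c * s + cnj t * of_real rj * t)" for s t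
  proof -
    have "0 \<le> Re (qform A (\<chi> k. if k = i then s else if k = j then t else 0))"
      using A unfolding psd_def by auto
    then show ?thesis unfolding qform_two[OF ij] Aii Ajj Aji c_def by simp
  qed
  show ?thesis
  proof (cases "rj = 0")
    case False
    then have rjp: "rj > 0" using rj0 by simp
    have "cnj (of_real rj) * of_real ri * of_real rj + cnj (of_real rj) * c * (- cnj c) + cnj (- cnj c) * cnj c * of_real rj + cnj (- cnj c) * of_real rj * (- cnj c)
      = of_real rj * (of_real rj * of_real ri - c * cnj c)"
      by simp algebra
    also have "\<dots> = of_real (rj * (rj * ri - (cmod c)^2))" unfolding cc by simp
    finally have eq: "cnj (of_real rj) * of_real ri * of_real rj + cnj (of_real rj) * c * (- cnj c) + cnj (- cnj c) * cnj c * of_real rj + cnj (- cnj c) * of_real rj * (- cnj c)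
      = of_real (rj * (rj * ri - (cmod c)^2))" .
    have "0 \<le> rj * (rj * ri - (cmod c)^2)" using Q[of "of_real rj" "- cnj c"] unfolding eq Re_complex_of_real .
    then have "0 \<le> rj * ri - (cmod c)^2" using rjp by (simp add: zero_le_mult_iff)
    then show ?thesis unfolding c_def ri_def rj_def by (simp add: mult.commute)
  next
    case True
    show ?thesis
    proof (rule ccontr)
      assume "\<not> ?thesis"
      then have cp: "(cmod c)^2 > 0" using True unfolding c_def ri_def rj_def by simp
      define k where "k = (ri + 1) / (cmod c)^2"
      have "cnj 1 * of_real ri * 1 + cnj 1 * c * (- of_real k * cnj c) + cnj (- of_real k * cnj c) * cnj c * 1 + cnj (- of_real k * cnj c) * of_real rj * (- of_real k * cnj c)
        = of_real ri - 2 * of_real k * (c * cnj c)"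
        using True by (simp; algebra)
      also have "\<dots> = of_real (ri - 2 * k * (cmod c)^2)" unfolding cc by simp
      finally have eq: "cnj 1 * of_real ri * 1 + cnj 1 * c * (- of_real k * cnj c) + cnj (- of_real k * cnj c) * cnj c * 1 + cnj (- of_real k * cnj c) * of_real rj * (- of_real k * cnj c)
        = of_real (ri - 2 * k * (cmod c)^2)" .
      have "0 \<le> ri - 2 * k * (cmod c)^2" using Q[of 1 "- of_real k * cnj c"] unfolding eq Re_complex_of_real .
      moreover have "k * (cmod c)^2 = ri + 1" unfolding k_def using cp by simp
      ultimately show False using ri0 by simp
    qed
  qed
qed



lemma unit_pair:
  fixes c :: complex
  assumes "cmod c \<le> 1"
  shows "\<exists>u1 u2. cmod u1 = 1 \<and> cmod u2 = 1 \<and> u1 + u2 = 2 * c"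
proof (cases "c = 0")
  case True
  then show ?thesis by (intro exI[of _ 1] exI[of _ "-1"]) simp
next
  case False
  define n where "n = cmod c"
  define h where "h = sqrt (1 - n^2)"
  define \<alpha> where "\<alpha> = Re c"
  define \<beta> where "\<beta> = Im c"
  have n2: "n^2 = \<alpha>^2 + \<beta>^2" unfolding n_def \<alpha>_def \<beta>_def cmod_def by simp
  have np: "n > 0" using False unfolding n_def by simp
  have n1: "n \<le> 1" using assms n_def by simp
  have h2: "h^2 = 1 - n^2" unfolding h_def using n1 np
    by (simp add: power_le_one)
  define u1 where "u1 = Complex (\<alpha> - h * \<beta> / n) (\<beta> + h * \<alpha> / n)"
  define u2 where "u2 = Complex (\<alpha> + h * \<beta> / n) (\<beta> - h * \<alpha> / n)"
  have key: "(\<alpha> - h * \<beta> / n)^2 + (\<beta> + h * \<alpha> / n)^2 = 1" "(\<alpha> + h * \<beta> / n)^2 + (\<beta> - h * \<alpha> / n)^2 = 1"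
  proof -
    have e: "(\<alpha> - h * \<beta> / n)^2 + (\<beta> + h * \<alpha> / n)^2 = (\<alpha>^2 + \<beta>^2) * (1 + h^2 / n^2)"
      "(\<alpha> + h * \<beta> / n)^2 + (\<beta> - h * \<alpha> / n)^2 = (\<alpha>^2 + \<beta>^2) * (1 + h^2 / n^2)"
      using np by (simp_all add: field_simps power2_eq_square)
    have "(\<alpha>^2 + \<beta>^2) * (1 + h^2 / n^2) = 1" unfolding n2[symmetric] h2 using np
      by (simp add: field_simps)
    then show "(\<alpha> - h * \<beta> / n)^2 + (\<beta> + h * \<alpha> / n)^2 = 1" "(\<alpha> + h * \<beta> / n)^2 + (\<beta> - h * \<alpha> / n)^2 = 1"
      using e by simp_all
  qed
  have "cmod u1 = 1" "cmod u2 = 1" unfolding u1_def u2_def cmod_def using key by simp_all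
  moreover have "u1 + u2 = 2 * c" unfolding u1_def u2_def \<alpha>_def \<beta>_def by (simp add: complex_eq_iff)
  ultimately show ?thesis by blast
qed



definition mix2 :: "complex^'n \<Rightarrow> complex^'n \<Rightarrow> complex^'n^'n" where
  "mix2 w1 w2 = (\<chi> i j. (w1 $ i * cnj (w1 $ j) + w2 $ i * cnj (w2 $ j)) / 2)"

lemma qform_rk1:
  fixes w v :: "complex^'n"
  shows "(\<Sum>i\<in>UNIV. \<Sum>j\<in>UNIV. cnj (v $ i) * (w $ i * cnj (w $ j)) * v $ j)
     = of_real ((cmod (\<Sum>i\<in>UNIV. cnj (v $ i) * w $ i))^2)"
proof -
  have "(\<Sum>i\<in>UNIV. \<Sum>j\<in>UNIV. cnj (v $ i) * (w $ i * cnj (w $ j)) * v $ j)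
     = (\<Sum>i\<in>UNIV. cnj (v $ i) * w $ i) * cnj (\<Sum>j\<in>UNIV. cnj (v $ j) * w $ j)"
    unfolding sum_product cnj_sum by (intro sum.cong refl) (simp add: mult_ac)
  also have "\<dots> = of_real ((cmod (\<Sum>i\<in>UNIV. cnj (v $ i) * w $ i))^2)"
    by (rule complex_norm_square[symmetric])
  finally show ?thesis .
qed

lemma psd_mix2: "psd (mix2 w1 w2)"
  unfolding psd_def
proof (intro conjI allI)
  show "mix2 w1 w2 = adjointm (mix2 w1 w2)"
    unfolding mix2_def adjointm_def by (simp add: vec_eq_iff mult.commute)
  have e: "qform (mix2 w1 w2) v = of_real (((cmod (\<Sum>i\<in>UNIV. cnj (v $ i) * w1 $ i))^2 + (cmod (\<Sum>i\<in>UNIV. cnj (v $ i) * w2 $ i))^2) / 2)" for v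
  proof -
  have "qform (mix2 w1 w2) v = ((\<Sum>i\<in>UNIV. \<Sum>j\<in>UNIV. cnj (v $ i) * (w1 $ i * cnj (w1 $ j)) * v $ j)
     + (\<Sum>i\<in>UNIV. \<Sum>j\<in>UNIV. cnj (v $ i) * (w2 $ i * cnj (w2 $ j)) * v $ j)) / 2"
    unfolding qform_def mix2_def
    by (simp add: sum.distrib[symmetric] sum_divide_distrib ring_distribs)
  also have "\<dots> = of_real (((cmod (\<Sum>i\<in>UNIV. cnj (v $ i) * w1 $ i))^2 + (cmod (\<Sum>i\<in>UNIV. cnj (v $ i) * w2 $ i))^2) / 2)"
    unfolding qform_rk1 by simp
  finally show ?thesis .
  qed
  fix v
  show "qform (mix2 w1 w2) v \<in> \<real>" unfolding e by simp
  show "0 \<le> Re (qform (mix2 w1 w2) v)" unfolding e Re_complex_of_real by simp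
qed


lemma qubit_form:
  assumes st: "is_state \<rho>" and z: "mtrace (\<rho> ** sigma_z) = 0"
  shows "\<rho> $ 1 $ 1 = 1/2" "\<rho> $ 2 $ 2 = 1/2" "\<rho> $ 2 $ 1 = cnj (\<rho> $ 1 $ 2)" "cmod (\<rho> $ 1 $ 2) \<le> 1/2"
proof -
  have t: "\<rho> $ 1 $ 1 + \<rho> $ 2 $ 2 = 1" using st unfolding is_state_def mtrace_def by (simp add: sum_2)
  have "\<rho> $ 1 $ 1 - \<rho> $ 2 $ 2 = 0" using z unfolding mtrace_def matrix_matrix_mult_def sigma_z_def
    by (simp add: sum_2)
  with t show a: "\<rho> $ 1 $ 1 = 1/2" "\<rho> $ 2 $ 2 = 1/2" by (simp_all add: complex_eq_iff)
  have p: "psd \<rho>" using st unfolding is_state_def by simp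
  show "\<rho> $ 2 $ 1 = cnj (\<rho> $ 1 $ 2)" by (rule psd_herm[OF p])
  have "(cmod (\<rho> $ 1 $ 2))^2 \<le> Re (\<rho> $ 1 $ 1) * Re (\<rho> $ 2 $ 2)" by (rule psd_offdiag[OF p]) simp
  also have "\<dots> = (1/2)^2" by (simp only: a) (simp add: power2_eq_square)
  finally show "cmod (\<rho> $ 1 $ 2) \<le> 1/2" by (rule power2_le_imp_le) simp
qed

lemma cost_formula: "mtrace (P ** C_z2) = 4 * (P $ (1,2) $ (1,2) + P $ (2,1) $ (2,1))"
proof -
  have "mtrace (P ** C_z2) = (\<Sum>p\<in>UNIV. P $ p $ p * (if fst p \<noteq> snd p then 4 else 0))"
    unfolding mtrace_def
  proof (intro sum.cong refl)
    fix p :: "2\<times>2"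
    have "(\<Sum>k\<in>UNIV. P $ p $ k * (if k = p \<and> fst k \<noteq> snd k then 4 else 0))
       = (\<Sum>k\<in>UNIV. if k = p then P $ p $ p * (if fst p \<noteq> snd p then 4 else 0) else 0)"
      by (intro sum.cong refl) auto
    then show "(P ** C_z2) $ p $ p = P $ p $ p * (if fst p \<noteq> snd p then 4 else 0)"
      unfolding C_z2_ent matrix_matrix_mult_def by simp
  qed
  then show ?thesis by (simp add: sum_22 algebra_simps)
qed


definition Gf :: "real \<Rightarrow> real" where "Gf t = 2 - 2 * sqrt (1 - 4 * t^2)"

lemma G_real_bound:
  fixes m x y :: real
  assumes "m^2 \<le> 4 * x * y" "x = 1/2 - y"
  shows "Gf m \<le> 8 * y"
proof -
  have "(1 - 4*y)^2 = 1 - 16 * x * y" unfolding assms(2) by (simp add: power2_eq_square algebra_simps)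
  moreover have "16 * x * y = 4 * (4 * x * y)" by simp
  ultimately have "(1 - 4*y)^2 \<le> 1 - 4 * m^2" using assms(1) by linarith
  then have "1 - 4*y \<le> sqrt (1 - 4 * m^2)" by (rule real_le_rsqrt)
  then show ?thesis unfolding Gf_def by simp
qed

lemma sum_sq_bound:
  fixes b \<alpha> \<beta> x y :: real
  assumes "0 \<le> \<alpha>" "0 \<le> \<beta>" "0 \<le> b" "b \<le> \<alpha> + \<beta>" "\<alpha>^2 \<le> x*y" "\<beta>^2 \<le> x*y"
  shows "b^2 \<le> 4*x*y"
proof -
  have "b^2 \<le> (\<alpha> + \<beta>)^2" using assms by (intro power_mono) auto
  also have "\<dots> \<le> 2 * (\<alpha>^2 + \<beta>^2)"
  proof -
    have "0 \<le> (\<alpha> - \<beta>)^2" by simp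
    then show ?thesis by (simp add: power2_eq_square algebra_simps)
  qed
  also have "\<dots> \<le> 2 * (x*y + x*y)" using assms(5,6) by (intro mult_left_mono add_mono) auto
  also have "\<dots> = 4*x*y" by simp
  finally show ?thesis .
qed

lemma lower_bound:
  assumes P: "P \<in> couplings \<rho> \<omega>"
    and r: "\<rho> $ 1 $ 1 = 1/2" "\<rho> $ 2 $ 2 = 1/2"
    and w: "\<omega> $ 1 $ 1 = 1/2" "\<omega> $ 2 $ 2 = 1/2"
  shows "Gf (max (cmod (\<rho> $ 1 $ 2)) (cmod (\<omega> $ 1 $ 2))) \<le> Re (mtrace (P ** C_z2))"
proof -
  have ps: "psd P" and pd: "ptrace_dual P = \<omega>" and ph: "ptrace_H P = transpose \<rho>"
    using P unfolding couplings_def is_state_def by auto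
  define x where "x = Re (P $ (1,1) $ (1,1))"
  define y where "y = Re (P $ (1,2) $ (1,2))"
  define y' where "y' = Re (P $ (2,1) $ (2,1))"
  define x' where "x' = Re (P $ (2,2) $ (2,2))"
  have D: "P $ (1,1) $ (1,1) = of_real x" "P $ (1,2) $ (1,2) = of_real y"
    "P $ (2,1) $ (2,1) = of_real y'" "P $ (2,2) $ (2,2) = of_real x'"
    unfolding x_def y_def y'_def x'_def using psd_diag(1)[OF ps] by blast+
  have "ptrace_dual P $ 1 $ 1 = \<omega> $ 1 $ 1" "ptrace_dual P $ 2 $ 2 = \<omega> $ 2 $ 2"
    "ptrace_H P $ 1 $ 1 = transpose \<rho> $ 1 $ 1" using pd ph by simp_all
  then have "of_real x + of_real y = (1/2 :: complex)" "of_real y' + of_real x' = (1/2 :: complex)"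
    "of_real x + of_real y' = (1/2::complex)"
    unfolding ptrace_dual_def ptrace_H_def transpose_def using r w D by (simp_all add: sum_2)
  then have E: "x + y = 1/2" "y' + x' = 1/2" "x + y' = 1/2"
    by (simp_all add: complex_eq_iff)
  have yy: "y' = y" "x' = x" using E by linarith+
  have b: "\<omega> $ 1 $ 2 = P $ (1,1) $ (2,1) + P $ (1,2) $ (2,2)"
    using pd[symmetric] unfolding ptrace_dual_def by (simp add: sum_2)
  have a: "\<rho> $ 1 $ 2 = P $ (1,2) $ (1,1) + P $ (2,2) $ (2,1)"
    using arg_cong[OF ph, of "\<lambda>M. M $ 2 $ 1"] unfolding ptrace_H_def transpose_def by (simp add: sum_2)
  have o1: "(cmod (P $ (1,1) $ (2,1)))^2 \<le> x * y" using psd_offdiag[OF ps, of "(1,1)" "(2,1)"]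
    unfolding x_def[symmetric] y'_def[symmetric] yy by simp
  have o2: "(cmod (P $ (1,2) $ (2,2)))^2 \<le> x * y" using psd_offdiag[OF ps, of "(1,2)" "(2,2)"]
    unfolding y_def[symmetric] x'_def[symmetric] yy by (simp add: mult.commute)
  have o3: "(cmod (P $ (1,2) $ (1,1)))^2 \<le> x * y" using psd_offdiag[OF ps, of "(1,2)" "(1,1)"]
    unfolding x_def[symmetric] y_def[symmetric] by (simp add: mult.commute)
  have o4: "(cmod (P $ (2,2) $ (2,1)))^2 \<le> x * y" using psd_offdiag[OF ps, of "(2,2)" "(2,1)"]
    unfolding x'_def[symmetric] y'_def[symmetric] yy by simp
  have mb: "(cmod (\<omega> $ 1 $ 2))^2 \<le> 4*x*y"
    by (rule sum_sq_bound[OF _ _ _ _ o1 o2]) (auto simp: b norm_triangle_ineq)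
  have ma: "(cmod (\<rho> $ 1 $ 2))^2 \<le> 4*x*y"
    by (rule sum_sq_bound[OF _ _ _ _ o3 o4]) (auto simp: a norm_triangle_ineq)
  have m: "(max (cmod (\<rho> $ 1 $ 2)) (cmod (\<omega> $ 1 $ 2)))^2 \<le> 4*x*y"
    using ma mb by (simp add: max_def)
  have "Gf (max (cmod (\<rho> $ 1 $ 2)) (cmod (\<omega> $ 1 $ 2))) \<le> 8 * y"
    by (rule G_real_bound[OF m]) (use E in linarith)
  also have "8 * y = Re (mtrace (P ** C_z2))" unfolding cost_formula D yy by simp
  finally show ?thesis .
qed



definition psi :: "complex \<Rightarrow> complex \<Rightarrow> complex \<Rightarrow> complex \<Rightarrow> complex^(2\<times>2)" where
  "psi X Y u v = (\<chi> e. if e = (1,1) then X else if e = (1,2) then Y * u else if e = (2,1) then Y * v else X * u * v)"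

lemma psi_simps: "psi X Y u v $ (1,1) = X" "psi X Y u v $ (1,2) = Y * u"
  "psi X Y u v $ (2,1) = Y * v" "psi X Y u v $ (2,2) = X * u * v"
  unfolding psi_def by simp_all

lemma mix2_ent: "mix2 w1 w2 $ e $ f = (w1 $ e * cnj (w1 $ f) + w2 $ e * cnj (w2 $ f)) / 2"
  unfolding mix2_def by simp

lemma construct_entries:
  fixes X Y u1 u2 v1 v2 :: complex
  defines "P \<equiv> mix2 (psi X Y u1 v1) (psi X Y u2 v2)"
  assumes X: "cnj X = X" and Y: "cnj Y = Y"
    and u: "u1 * cnj u1 = 1" "u2 * cnj u2 = 1" and v: "v1 * cnj v1 = 1" "v2 * cnj v2 = 1"
  shows "P $ (1,1) $ (1,1) = X * X" "P $ (1,2) $ (1,2) = Y * Y" "P $ (2,1) $ (2,1) = Y * Y" "P $ (2,2) $ (2,2) = X * X"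
    "P $ (1,1) $ (2,1) + P $ (1,2) $ (2,2) = X * Y * (cnj v1 + cnj v2)"
    "P $ (1,1) $ (1,2) + P $ (2,1) $ (2,2) = X * Y * (cnj u1 + cnj u2)"
  using u v apply (simp_all only: P_def mix2_ent psi_simps complex_cnj_mult X Y)
  apply algebra+
  done


lemma mix2_herm: "mix2 w1 w2 $ f $ e = cnj (mix2 w1 w2 $ e $ f)"
  unfolding mix2_ent by (simp add: mult.commute)

lemma construct:
  assumes r: "\<rho> $ 1 $ 1 = 1/2" "\<rho> $ 2 $ 2 = 1/2" "\<rho> $ 2 $ 1 = cnj (\<rho> $ 1 $ 2)" "cmod (\<rho> $ 1 $ 2) \<le> 1/2"
    and w: "\<omega> $ 1 $ 1 = 1/2" "\<omega> $ 2 $ 2 = 1/2" "\<omega> $ 2 $ 1 = cnj (\<omega> $ 1 $ 2)" "cmod (\<omega> $ 1 $ 2) \<le> 1/2"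
  shows "\<exists>P \<in> couplings \<rho> \<omega>. Re (mtrace (P ** C_z2)) = Gf (max (cmod (\<rho> $ 1 $ 2)) (cmod (\<omega> $ 1 $ 2)))"
proof -
  define a where "a = \<rho> $ 1 $ 2"
  define b where "b = \<omega> $ 1 $ 2"
  define m where "m = max (cmod a) (cmod b)"
  have m0: "0 \<le> m" unfolding m_def by (simp add: le_max_iff_disj)
  have m1: "m \<le> 1/2" using r(4) w(4) unfolding m_def a_def b_def by simp
  define rr where "rr = sqrt (1 - 4 * m^2)"
  have "m^2 \<le> (1/2)^2" using m0 m1 by (intro power_mono) auto
  then have q0: "0 \<le> 1 - 4 * m^2" by (simp add: power2_eq_square)
  have rr0: "0 \<le> rr" unfolding rr_def using q0 by simp
  have rr1: "rr \<le> 1" unfolding rr_def by (rule real_sqrt_le_1_iff[THEN iffD2]) simp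
  have rr2: "rr^2 = 1 - 4 * m^2" unfolding rr_def using q0 by simp
  define x where "x = (1 + rr) / 4"
  define y where "y = (1 - rr) / 4"
  have x0: "0 \<le> x" and y0: "0 \<le> y" unfolding x_def y_def using rr0 rr1 by auto
  have xy: "x * y = (m/2)^2" unfolding x_def y_def using rr2 by (simp add: power2_eq_square field_simps)
  have sxy: "sqrt x * sqrt y = m / 2" using m0 by (simp add: real_sqrt_mult[symmetric] xy)
  define X where "X = complex_of_real (sqrt x)"
  define Y where "Y = complex_of_real (sqrt y)"
  have XX: "X * X = of_real x" unfolding X_def using x0 by (simp flip: of_real_mult)
  have YY: "Y * Y = of_real y" unfolding Y_def using y0 by (simp flip: of_real_mult)
  have XY: "X * Y = of_real m / 2" unfolding X_def Y_def by (simp flip: of_real_mult add: sxy)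
  define ca where "ca = (if m = 0 then 0 else a / of_real m)"
  define cb where "cb = (if m = 0 then 0 else cnj b / of_real m)"
  have ca1: "cmod ca \<le> 1" and cb1: "cmod cb \<le> 1" using m0
    unfolding ca_def cb_def m_def by (auto simp: norm_divide divide_le_eq_1)
  have am: "cmod a \<le> m" and bm: "cmod b \<le> m" unfolding m_def by simp_all
  have mca: "of_real m * ca = a" using am unfolding ca_def by auto
  have mcb: "of_real m * cnj cb = b" using bm unfolding cb_def by auto
  obtain u1 u2 where u: "cmod u1 = 1" "cmod u2 = 1" "u1 + u2 = 2 * ca" using unit_pair[OF ca1] by blast
  obtain v1 v2 where v: "cmod v1 = 1" "cmod v2 = 1" "v1 + v2 = 2 * cb" using unit_pair[OF cb1] by blast
  have uc: "u1 * cnj u1 = 1" "u2 * cnj u2 = 1" "v1 * cnj v1 = 1" "v2 * cnj v2 = 1"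
    using u(1,2) v(1,2) complex_norm_square by (metis of_real_1 power_one)+
  define P where "P = mix2 (psi X Y u1 v1) (psi X Y u2 v2)"
  have cX: "cnj X = X" "cnj Y = Y" unfolding X_def Y_def by simp_all
  note E = construct_entries[OF cX uc, folded P_def]
  have xy2: "x + y = 1/2" unfolding x_def y_def by (simp add: field_simps)
  have d11: "P $ (1,1) $ (1,1) + P $ (1,2) $ (1,2) = 1/2" "P $ (2,1) $ (2,1) + P $ (2,2) $ (2,2) = 1/2"
    "P $ (1,1) $ (1,1) + P $ (2,1) $ (2,1) = 1/2" "P $ (1,2) $ (1,2) + P $ (2,2) $ (2,2) = 1/2"
  proof -
    have xyc: "complex_of_real x + of_real y = 1/2" using arg_cong[OF xy2, of complex_of_real] by simp
    then have "complex_of_real y + of_real x = 1/2" by (simp add: add.commute)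
    with xyc show "P $ (1,1) $ (1,1) + P $ (1,2) $ (1,2) = 1/2" "P $ (2,1) $ (2,1) + P $ (2,2) $ (2,2) = 1/2"
    "P $ (1,1) $ (1,1) + P $ (2,1) $ (2,1) = 1/2" "P $ (1,2) $ (1,2) + P $ (2,2) $ (2,2) = 1/2"
      unfolding E XX YY by simp_all
  qed
  have ob: "P $ (1,1) $ (2,1) + P $ (1,2) $ (2,2) = b"
  proof -
    have "X * Y * (cnj v1 + cnj v2) = of_real m * cnj ((v1 + v2) / 2)" unfolding XY by simp
    also have "\<dots> = b" unfolding v(3) using mcb by simp
    finally show ?thesis unfolding E .
  qed
  have oa: "P $ (1,1) $ (1,2) + P $ (2,1) $ (2,2) = cnj a"
  proof -
    have "X * Y * (cnj u1 + cnj u2) = of_real m * cnj ((u1 + u2) / 2)" unfolding XY by simp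
    also have "\<dots> = cnj a" unfolding u(3) using mca[symmetric] by simp
    finally show ?thesis unfolding E .
  qed
  have ob': "P $ (2,1) $ (1,1) + P $ (2,2) $ (1,2) = cnj b"
    using arg_cong[OF ob, of cnj] unfolding P_def by (simp add: mix2_herm[of _ _ "(1,1)"] mix2_herm[of _ _ "(1,2)"])
  have oa': "P $ (1,2) $ (1,1) + P $ (2,2) $ (2,1) = a"
    using arg_cong[OF oa, of cnj] unfolding P_def by (simp add: mix2_herm[of _ _ "(1,1)"] mix2_herm[of _ _ "(2,1)"])
  have st: "is_state P"
    unfolding is_state_def
  proof
    show "psd P" unfolding P_def by (rule psd_mix2)
    have "mtrace P = (P $ (1,1) $ (1,1) + P $ (1,2) $ (1,2)) + (P $ (2,1) $ (2,1) + P $ (2,2) $ (2,2))"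
      unfolding mtrace_def sum_22 by (simp add: add.assoc)
    then show "mtrace P = 1" unfolding d11(1,2) by simp
  qed
  have pd: "ptrace_dual P = \<omega>"
    unfolding vec_eq_iff forall_2 ptrace_dual_def
    by (simp add: sum_2 b_def d11 ob ob' w)
  have ph: "ptrace_H P = transpose \<rho>"
    unfolding vec_eq_iff forall_2 ptrace_H_def Finite_Cartesian_Product.transpose_def
    by (simp add: sum_2 a_def d11 oa oa' r)
  have cost: "Re (mtrace (P ** C_z2)) = Gf m"
  proof -
    have "Re (mtrace (P ** C_z2)) = 8 * y" unfolding cost_formula E YY by simp
    also have "\<dots> = Gf m" unfolding Gf_def y_def rr_def by simp
    finally show ?thesis .
  qed
  show ?thesis using st pd ph cost unfolding couplings_def m_def a_def b_def by blast
qed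


lemma D2_exact:
  assumes "is_state \<rho>" "mtrace (\<rho> ** sigma_z) = 0" "is_state \<omega>" "mtrace (\<omega> ** sigma_z) = 0"
  shows "D2_z2 \<rho> \<omega> = Gf (max (cmod (\<rho> $ 1 $ 2)) (cmod (\<omega> $ 1 $ 2)))"
proof -
  note r = qubit_form[OF assms(1,2)] and w = qubit_form[OF assms(3,4)]
  obtain P0 where P0: "P0 \<in> couplings \<rho> \<omega>" "Re (mtrace (P0 ** C_z2)) = Gf (max (cmod (\<rho> $ 1 $ 2)) (cmod (\<omega> $ 1 $ 2)))"
    using construct[OF r w] by blast
  show ?thesis unfolding D2_z2_def
  proof (rule cInf_eq_minimum)
    show "Gf (max (cmod (\<rho> $ 1 $ 2)) (cmod (\<omega> $ 1 $ 2))) \<in> (\<lambda>P. Re (mtrace (P ** C_z2))) ` couplings \<rho> \<omega>"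
      using P0 by (metis image_eqI)
    fix z assume "z \<in> (\<lambda>P. Re (mtrace (P ** C_z2))) ` couplings \<rho> \<omega>"
    then obtain P where "P \<in> couplings \<rho> \<omega>" "z = Re (mtrace (P ** C_z2))" by blast
    then show "Gf (max (cmod (\<rho> $ 1 $ 2)) (cmod (\<omega> $ 1 $ 2))) \<le> z"
      using lower_bound[OF _ r(1,2) w(1,2)] by blast
  qed
qed

lemma Gf_mono: assumes "0 \<le> t" "t \<le> t'" shows "Gf t \<le> Gf t'"
proof -
  have "t^2 \<le> t'^2" using assms by (intro power_mono) auto
  then have "sqrt (1 - 4 * t'^2) \<le> sqrt (1 - 4 * t^2)" by simp
  then show ?thesis unfolding Gf_def by simp
qed

theorem proposition3p8:
  fixes \<rho> \<sigma> \<omega> :: "complex^2^2"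
  assumes "is_state \<rho>" "is_state \<sigma>" "is_state \<omega>"
    and "mtrace (\<rho> ** sigma_z) = 0" "mtrace (\<sigma> ** sigma_z) = 0" "mtrace (\<omega> ** sigma_z) = 0"
  shows "d2_z2 \<rho> \<sigma> + d2_z2 \<sigma> \<omega> \<ge> d2_z2 \<rho> \<omega>"
proof -
  define A where "A = cmod (\<rho> $ 1 $ 2)"
  define S where "S = cmod (\<sigma> $ 1 $ 2)"
  define W where "W = cmod (\<omega> $ 1 $ 2)"
  have e1: "D2_z2 \<rho> \<sigma> = Gf (max A S)" unfolding A_def S_def by (rule D2_exact) (use assms in auto)
  have e2: "D2_z2 \<sigma> \<omega> = Gf (max S W)" unfolding W_def S_def by (rule D2_exact) (use assms in auto)
  have e3: "D2_z2 \<sigma> \<sigma> = Gf S" unfolding S_def using D2_exact[of \<sigma> \<sigma>] assms by simp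
  have e4: "D2_z2 \<rho> \<omega> = Gf (max A W)" unfolding A_def W_def by (rule D2_exact) (use assms in auto)
  have A0: "0 \<le> A" and S0: "0 \<le> S" and W0: "0 \<le> W" unfolding A_def S_def W_def by simp_all
  have key: "Gf S + Gf (max A W) \<le> Gf (max A S) + Gf (max S W)"
  proof (cases "W \<le> A")
    case True
    then have "Gf (max A W) \<le> Gf (max A S)" using A0 W0 by (intro Gf_mono) auto
    moreover have "Gf S \<le> Gf (max S W)" using S0 by (intro Gf_mono) auto
    ultimately show ?thesis by simp
  next
    case False
    then have "Gf (max A W) \<le> Gf (max S W)" using A0 W0 by (intro Gf_mono) auto
    moreover have "Gf S \<le> Gf (max A S)" using S0 by (intro Gf_mono) auto
    ultimately show ?thesis by simp
  qed
  show ?thesis unfolding d2_z2_def e1 e2 e3 e4 using key by (simp add: field_simps)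
qed

end
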